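(* Let $h<k\leq d$ be integers with $h\geq 0$, and assume $\dim(S^kV\otimes S^{d-k}V)\leq\dim(S^hV\otimes S^{d-h}V)$. Then the linear map $\eta^{k-h}:S^kV\otimes S^{d-k}V\to S^hV\otimes S^{d-h}V$, $\eta^{k-h}=\sum_{|I|=k-h}\binom{k-h}{I}\partial^I\otimes x^I$, is injective.
   Context: $V\cong\mathbb{C}^{n+1}$ and $S^iV$ is identified with the space of homogeneous polynomials of degree $i$ in $x_0,\dots,x_n$. For a multi-index $I=(i_0,\dots,i_n)$, $|I|=\sum i_j$, $\binom{m}{I}=m!/(i_0!\cdots i_n!)$, $x^I=\prod x_j^{i_j}$, $\partial^I=\prod\partial_{x_j}^{i_j}$. The operator $\partial^I\otimes x^I$ acts on $p\otimes q\in S^kV\otimes S^{d-k}V$ by $p\otimes q\mapsto \partial^I p\otimes x^I q$. *)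

theory Defs
  imports Complex_Main
begin

text \<open>V = C^(n+1) with coordinates x_0..x_n. S^k V has the monomial basis x^I, |I| = k, so an element of
  S^k V (x) S^(d-k) V is given by its coefficients c(A,B) on the basis x^A (x) x^B,
  with |A| = k and |B| = d - k.\<close>

definition multi_idx :: "nat \<Rightarrow> nat \<Rightarrow> (nat \<Rightarrow> nat) set" where
  "multi_idx n k = {I. (\<forall>j>n. I j = 0) \<and> (\<Sum>j\<le>n. I j) = k}"

definition dimS :: "nat \<Rightarrow> nat \<Rightarrow> nat" where
  "dimS n k = card (multi_idx n k)"

definition tensor_space :: "nat \<Rightarrow> nat \<Rightarrow> nat \<Rightarrow> ((nat \<Rightarrow> nat) \<times> (nat \<Rightarrow> nat) \<Rightarrow> complex) set" where
  "tensor_space n k d = {c. \<forall>A B. c (A, B) \<noteq> 0 \<longrightarrow> A \<in> multi_idx n k \<and> B \<in> multi_idx n (d - k)}"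

definition multinom :: "nat \<Rightarrow> nat \<Rightarrow> (nat \<Rightarrow> nat) \<Rightarrow> complex" where
  "multinom n m I = of_nat (fact m) / (\<Prod>j\<le>n. of_nat (fact (I j)))"

text \<open>Using
  d^I x^(A'+I) = (prod_j (A'_j+I_j)!/A'_j!) x^A'  and  x^I x^(B'-I) = x^B'  (when I <= B'),
  the coefficient of x^A' (x) x^B' in eta^m(c) is given below.\<close>
definition eta :: "nat \<Rightarrow> nat \<Rightarrow> ((nat \<Rightarrow> nat) \<times> (nat \<Rightarrow> nat) \<Rightarrow> complex)
    \<Rightarrow> ((nat \<Rightarrow> nat) \<times> (nat \<Rightarrow> nat) \<Rightarrow> complex)" where
  "eta n m c = (\<lambda>(A, B). \<Sum>I\<in>multi_idx n m.
      if (\<forall>j. I j \<le> B j)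
      then multinom n m I * (\<Prod>j\<le>n. of_nat (fact (A j + I j)) / of_nat (fact (A j)))
           * c (\<lambda>j. A j + I j, \<lambda>j. B j - I j)
      else 0)"

end

theory Submission
  imports Defs
begin


lemma finite_multi_idx: "finite (multi_idx n k)"
proof -
  have "multi_idx n k \<subseteq> {f. \<forall>x. (x \<in> {..n} \<longrightarrow> f x \<in> {..k}) \<and> (x \<notin> {..n} \<longrightarrow> f x = 0)}"
  proof
    fix f assume f: "f \<in> multi_idx n k"
    have "\<forall>x\<le>n. f x \<le> k"
    proof (intro allI impI)
      fix x assume "x \<le> n"
      hence "f x \<le> (\<Sum>j\<le>n. f j)" by (intro member_le_sum) auto
      thus "f x \<le> k" using f by (simp add: multi_idx_def)
    qed
    thus "f \<in> {f. \<forall>x. (x \<in> {..n} \<longrightarrow> f x \<in> {..k}) \<and> (x \<notin> {..n} \<longrightarrow> f x = 0)}"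
      using f by (auto simp: multi_idx_def)
  qed
  thus ?thesis by (rule finite_subset) (intro finite_set_of_finite_funs, auto)
qed

lemma card_multi_idx: "card (multi_idx n k) = (n + k) choose k"
proof (induction n arbitrary: k)
  case 0
  have "multi_idx 0 k = {(\<lambda>j. if j = 0 then k else 0)}"
    by (auto simp: multi_idx_def fun_eq_iff)
  thus ?case by simp
next
  case (Suc n)
  have bij: "bij_betw (\<lambda>I. (I (Suc n), I(Suc n := 0))) (multi_idx (Suc n) k)
        (Sigma {..k} (\<lambda>i. multi_idx n (k - i)))"
  proof (rule bij_betw_byWitness[where f' = "\<lambda>(i, J). J(Suc n := i)"])
    show "\<forall>a\<in>multi_idx (Suc n) k. (\<lambda>(i, J). J(Suc n := i)) (a (Suc n), a(Suc n := 0)) = a"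
      by auto
    show "\<forall>a'\<in>Sigma {..k} (\<lambda>i. multi_idx n (k - i)).
       (\<lambda>I. (I (Suc n), I(Suc n := 0))) ((\<lambda>(i, J). J(Suc n := i)) a') = a'"
      by (auto simp: multi_idx_def fun_eq_iff)
    show "(\<lambda>I. (I (Suc n), I(Suc n := 0))) ` multi_idx (Suc n) k \<subseteq> Sigma {..k} (\<lambda>i. multi_idx n (k - i))"
    proof (rule image_subsetI)
      fix I assume I: "I \<in> multi_idx (Suc n) k"
      hence s: "(\<Sum>j\<le>n. I j) + I (Suc n) = k" by (simp add: multi_idx_def)
      have "(\<Sum>j\<le>n. (I(Suc n := 0)) j) = (\<Sum>j\<le>n. I j)" by (intro sum.cong) auto
      moreover have "\<forall>j>n. (I(Suc n := 0)) j = 0" using I by (auto simp: multi_idx_def)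
      ultimately have "I(Suc n := 0) \<in> multi_idx n (k - I (Suc n))"
        using s by (auto simp: multi_idx_def)
      thus "(I (Suc n), I(Suc n := 0)) \<in> Sigma {..k} (\<lambda>i. multi_idx n (k - i))"
        using s by auto
    qed
    show "(\<lambda>(i, J). J(Suc n := i)) ` Sigma {..k} (\<lambda>i. multi_idx n (k - i)) \<subseteq> multi_idx (Suc n) k"
    proof (rule image_subsetI)
      fix x assume x: "x \<in> Sigma {..k} (\<lambda>i. multi_idx n (k - i))"
      then obtain i J where xe: "x = (i, J)" and i: "i \<in> {..k}" and J: "J \<in> multi_idx n (k - i)" by auto
      have "(\<Sum>j\<le>n. (J(Suc n := i)) j) = (\<Sum>j\<le>n. J j)" by (intro sum.cong) auto
      moreover have "(\<Sum>j\<le>n. J j) = k - i" using J by (simp add: multi_idx_def)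
      ultimately have "(\<Sum>j\<le>Suc n. (J(Suc n := i)) j) = k" using i by simp
      moreover have "\<forall>j>Suc n. (J(Suc n := i)) j = 0" using J by (auto simp: multi_idx_def)
      ultimately show "(\<lambda>(i, J). J(Suc n := i)) x \<in> multi_idx (Suc n) k" by (simp add: multi_idx_def xe)
    qed
  qed
  have "card (multi_idx (Suc n) k) = card (Sigma {..k} (\<lambda>i. multi_idx n (k - i)))"
    using bij by (rule bij_betw_same_card)
  also have "\<dots> = (\<Sum>i\<le>k. card (multi_idx n (k - i)))"
    by (rule card_SigmaI) (auto simp: finite_multi_idx)
  also have "\<dots> = (\<Sum>i\<le>k. (n + (k - i)) choose (k - i))" by (simp add: Suc.IH)
  also have "\<dots> = (\<Sum>i\<le>k. (n + i) choose i)"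
    by (rule sum.reindex_bij_witness[where i="\<lambda>i. k - i" and j="\<lambda>i. k - i"]) auto
  also have "\<dots> = Suc (n + k) choose k" by (rule sum_choose_lower)
  finally show ?case by simp
qed



lemma Dstep: "((n + j) choose j) * (n + Suc j) = ((n + Suc j) choose Suc j) * Suc j"
  using Suc_times_binomial_eq[of "n+j" j] by (simp add: mult.commute)

lemma fstep:
  fixes n j d :: nat
  assumes "n \<ge> 1" "2 * j + 2 \<le> d"
  shows "((n+j) choose j) * ((n + (d-j)) choose (d-j)) < ((n+Suc j) choose Suc j) * ((n + (d - Suc j)) choose (d - Suc j))"
proof -
  define p where "p = d - Suc j"
  have dj: "d - j = Suc p" using assms p_def by auto
  have jp: "j < p" using assms p_def by auto
  define Dj where "Dj = (n+j) choose j"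
  define Dj1 where "Dj1 = (n+Suc j) choose Suc j"
  define Dp where "Dp = (n+p) choose p"
  define Dp1 where "Dp1 = (n+Suc p) choose Suc p"
  have e1: "Dj * (n + Suc j) = Dj1 * Suc j" using Dstep[of n j] by (simp add: Dj_def Dj1_def)
  have e2: "Dp * (n + Suc p) = Dp1 * Suc p" using Dstep[of n p] by (simp add: Dp_def Dp1_def)
  have pos: "Dj * Dp > 0" by (simp add: Dj_def Dp_def)
  have "Suc j * (n + Suc p) < Suc p * (n + Suc j)"
  proof -
    have "n * j < n * p" using jp assms by simp
    thus ?thesis by (simp add: algebra_simps)
  qed
  hence "(Dj * Dp) * (Suc j * (n + Suc p)) < (Dj * Dp) * (Suc p * (n + Suc j))"
    using pos by simp
  moreover have "(Dj * Dp) * (Suc j * (n + Suc p)) = (Suc j * Suc p) * (Dj * Dp1)"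
  proof -
    have "(Dj * Dp) * (Suc j * (n + Suc p)) = (Suc j * Dj) * (Dp * (n + Suc p))" by (simp only: ac_simps)
    also have "\<dots> = (Suc j * Dj) * (Dp1 * Suc p)" by (simp only: e2)
    also have "\<dots> = (Suc j * Suc p) * (Dj * Dp1)" by (simp only: ac_simps)
    finally show ?thesis .
  qed
  moreover have "(Dj * Dp) * (Suc p * (n + Suc j)) = (Suc j * Suc p) * (Dj1 * Dp)"
  proof -
    have "(Dj * Dp) * (Suc p * (n + Suc j)) = (Suc p * Dp) * (Dj * (n + Suc j))" by (simp only: ac_simps)
    also have "\<dots> = (Suc p * Dp) * (Dj1 * Suc j)" by (simp only: e1)
    also have "\<dots> = (Suc j * Suc p) * (Dj1 * Dp)" by (simp only: ac_simps)
    finally show ?thesis .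
  qed
  ultimately have "(Suc j * Suc p) * (Dj * Dp1) < (Suc j * Suc p) * (Dj1 * Dp)" by metis
  hence "Dj * Dp1 < Dj1 * Dp" by (rule mult_less_cancel1[THEN iffD1, THEN conjunct2])
  thus ?thesis by (simp add: Dj_def Dj1_def Dp_def Dp1_def dj p_def)
qed

lemma fmono:
  fixes n h d :: nat
  assumes "n \<ge> 1"
  shows "h < k \<Longrightarrow> 2 * k \<le> d \<Longrightarrow> ((n+h) choose h) * ((n + (d-h)) choose (d-h)) < ((n+k) choose k) * ((n + (d - k)) choose (d - k))"
proof (induction k)
  case 0 thus ?case by simp
next
  case (Suc k)
  have st: "((n+k) choose k) * ((n + (d-k)) choose (d-k)) < ((n+Suc k) choose Suc k) * ((n + (d - Suc k)) choose (d - Suc k))"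
    using fstep[OF assms, of k d] Suc.prems by simp
  show ?case
  proof (cases "h = k")
    case True thus ?thesis using st by simp
  next
    case False
    hence "h < k" using Suc.prems by simp
    thus ?thesis using Suc.IH Suc.prems st by simp
  qed
qed

lemma dim_cond:
  fixes n h k d :: nat
  assumes "n \<ge> 1" "h < k" "k \<le> d"
    and "dimS n k * dimS n (d - k) \<le> dimS n h * dimS n (d - h)"
    and card: "\<And>j. dimS n j = (n + j) choose j"
  shows "d \<le> k + h"
proof (rule ccontr)
  assume "\<not> d \<le> k + h"
  hence dk: "h < d - k" by simp
  define k' where "k' = min k (d - k)"
  have "h < k'" using dk assms by (simp add: k'_def)
  moreover have "2 * k' \<le> d" using assms by (simp add: k'_def)
  ultimately have lt: "((n+h) choose h) * ((n + (d-h)) choose (d-h)) < ((n+k') choose k') * ((n + (d - k')) choose (d - k'))"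
    by (rule fmono[OF assms(1)])
  have "((n+k') choose k') * ((n + (d - k')) choose (d - k')) = ((n+k) choose k) * ((n + (d - k)) choose (d - k))"
  proof (cases "k \<le> d - k")
    case True thus ?thesis by (simp add: k'_def)
  next
    case False
    hence "k' = d - k" by (simp add: k'_def)
    moreover have "d - (d - k) = k" using assms by simp
    ultimately show ?thesis by (simp add: mult.commute)
  qed
  thus False using lt assms(4) by (simp add: card)
qed



type_synonym vec = "(nat \<Rightarrow> nat) \<times> (nat \<Rightarrow> nat) \<Rightarrow> complex"

definition Eop :: "nat \<Rightarrow> vec \<Rightarrow> vec" where
  "Eop n c = (\<lambda>(A, B). \<Sum>j\<le>n. if 0 < B j then of_nat (Suc (A j)) * c (A(j := Suc (A j)), B(j := B j - 1)) else 0)"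

definition Fop :: "nat \<Rightarrow> vec \<Rightarrow> vec" where
  "Fop n c = (\<lambda>(A, B). \<Sum>j\<le>n. if 0 < A j then of_nat (Suc (B j)) * c (A(j := A j - 1), B(j := Suc (B j))) else 0)"

definition TS :: "nat \<Rightarrow> nat \<Rightarrow> nat \<Rightarrow> vec \<Rightarrow> bool" where
  "TS n a b c \<longleftrightarrow> (\<forall>A B. c (A, B) \<noteq> 0 \<longrightarrow> A \<in> multi_idx n a \<and> B \<in> multi_idx n b)"

lemma if_sum_distrib: "(if P then s * sum f S else 0) = (\<Sum>j\<in>S. if P then s * f j else 0)"
  for s :: complex by (simp add: sum_distrib_left)

lemma comm_point:
  fixes c :: vec
  shows "Fop n (Eop n c) (A, B) = Eop n (Fop n c) (A, B)
     + (of_nat (\<Sum>i\<le>n. A i) - of_nat (\<Sum>i\<le>n. B i)) * c (A, B)"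
proof -
  define G where "G i j = (if 0 < A i then of_nat (Suc (B i)) *
     (if 0 < (B(i := Suc (B i))) j then of_nat (Suc ((A(i := A i - 1)) j)) *
        c ((A(i := A i - 1))(j := Suc ((A(i := A i - 1)) j)), (B(i := Suc (B i)))(j := (B(i := Suc (B i))) j - 1)) else 0) else 0)" for i j
  define H where "H j i = (if 0 < B j then of_nat (Suc (A j)) *
     (if 0 < (A(j := Suc (A j))) i then of_nat (Suc ((B(j := B j - 1)) i)) *
        c ((A(j := Suc (A j)))(i := (A(j := Suc (A j))) i - 1), (B(j := B j - 1))(i := Suc ((B(j := B j - 1)) i))) else 0) else 0)" for i j
  have FE: "Fop n (Eop n c) (A, B) = (\<Sum>i\<le>n. \<Sum>j\<le>n. G i j)"
    unfolding Fop_def Eop_def G_def prod.case by (simp only: if_sum_distrib)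
  have EF: "Eop n (Fop n c) (A, B) = (\<Sum>j\<le>n. \<Sum>i\<le>n. H j i)"
    unfolding Fop_def Eop_def H_def prod.case by (simp only: if_sum_distrib)
  also have "\<dots> = (\<Sum>i\<le>n. \<Sum>j\<le>n. H j i)" by (rule sum.swap)
  finally have EF': "Eop n (Fop n c) (A, B) = (\<Sum>i\<le>n. \<Sum>j\<le>n. H j i)" .
  have off: "G i j = H j i" if "i \<noteq> j" for i j
  proof -
    have e1: "(A(i := A i - 1))(j := Suc (A j)) = (A(j := Suc (A j)))(i := A i - 1)"
      using that by (simp add: fun_upd_twist)
    have e2: "(B(i := Suc (B i)))(j := B j - 1) = (B(j := B j - 1))(i := Suc (B i))"
      using that by (simp add: fun_upd_twist)
    show ?thesis unfolding G_def H_def using that e1 e2 by (simp add: algebra_simps)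
  qed
  have diag: "G i i - H i i = (of_nat (A i) - of_nat (B i)) * c (A, B)" for i
  proof -
    have G: "G i i = of_nat (A i) * of_nat (Suc (B i)) * c (A, B)"
    proof (cases "A i = 0")
      case True thus ?thesis by (simp add: G_def)
    next
      case False
      hence "(A(i := A i - 1))(i := Suc (A i - 1)) = A" by (auto simp: fun_eq_iff)
      thus ?thesis using False by (simp add: G_def algebra_simps)
    qed
    have H: "H i i = of_nat (B i) * of_nat (Suc (A i)) * c (A, B)"
    proof (cases "B i = 0")
      case True thus ?thesis by (simp add: H_def)
    next
      case False
      hence "(B(i := B i - 1))(i := Suc (B i - 1)) = B" by (auto simp: fun_eq_iff)
      thus ?thesis using False by (simp add: H_def algebra_simps)
    qed
    show ?thesis unfolding G H by (simp add: algebra_simps)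
  qed
  have "Fop n (Eop n c) (A, B) - Eop n (Fop n c) (A, B) = (\<Sum>i\<le>n. \<Sum>j\<le>n. G i j - H j i)"
    unfolding FE EF' by (simp add: sum_subtractf)
  also have "\<dots> = (\<Sum>i\<le>n. G i i - H i i)"
  proof (rule sum.cong[OF refl])
    fix i assume i: "i \<in> {..n}"
    have "(\<Sum>j\<le>n. G i j - H j i) = (\<Sum>j\<le>n. if j = i then G i i - H i i else 0)"
      by (rule sum.cong) (auto simp: off)
    also have "\<dots> = G i i - H i i" using i by simp
    finally show "(\<Sum>j\<le>n. G i j - H j i) = G i i - H i i" .
  qed
  also have "\<dots> = (\<Sum>i\<le>n. (of_nat (A i) - of_nat (B i)) * c (A, B))" by (simp add: diag)
  also have "\<dots> = (of_nat (\<Sum>i\<le>n. A i) - of_nat (\<Sum>i\<le>n. B i)) * c (A, B)"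
    by (simp add: sum_distrib_right[symmetric] sum_subtractf)
  finally show ?thesis by (simp add: algebra_simps)
qed



lemma Eop_lin: "Eop n (\<lambda>p. x p + s * y p) = (\<lambda>p. Eop n x p + s * Eop n y p)"
proof (rule ext, clarify)
  fix A B
  show "Eop n (\<lambda>p. x p + s * y p) (A, B) = Eop n x (A, B) + s * Eop n y (A, B)"
    unfolding Eop_def prod.case sum_distrib_left sum.distrib[symmetric]
    by (rule sum.cong) (auto simp: algebra_simps)
qed

lemma Fop_lin: "Fop n (\<lambda>p. x p + s * y p) = (\<lambda>p. Fop n x p + s * Fop n y p)"
proof (rule ext, clarify)
  fix A B
  show "Fop n (\<lambda>p. x p + s * y p) (A, B) = Fop n x (A, B) + s * Fop n y (A, B)"
    unfolding Fop_def prod.case sum_distrib_left sum.distrib[symmetric]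
    by (rule sum.cong) (auto simp: algebra_simps)
qed

lemma Eop_zero: "Eop n (\<lambda>p. 0) = (\<lambda>p. 0)"
  unfolding Eop_def by (auto simp: fun_eq_iff intro!: sum.neutral)

lemma Fop_zero: "Fop n (\<lambda>p. 0) = (\<lambda>p. 0)"
  unfolding Fop_def by (auto simp: fun_eq_iff intro!: sum.neutral)

lemma Epow_lin: "(Eop n ^^ m) (\<lambda>p. x p + s * y p) = (\<lambda>p. (Eop n ^^ m) x p + s * (Eop n ^^ m) y p)"
  by (induction m) (simp_all add: Eop_lin)

lemma Epow_zero: "(Eop n ^^ m) (\<lambda>p. 0) = (\<lambda>p. 0)"
  by (induction m) (simp_all add: Eop_zero)

lemma sum_upd:
  fixes A :: "nat \<Rightarrow> nat"
  assumes "j \<le> n"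
  shows "(\<Sum>i\<le>n. (A(j := x)) i) + A j = (\<Sum>i\<le>n. A i) + x"
proof -
  have "(\<Sum>i\<le>n. (A(j := x)) i) = x + (\<Sum>i\<in>{..n} - {j}. A i)"
    using assms by (simp add: sum.remove)
  moreover have "(\<Sum>i\<le>n. A i) = A j + (\<Sum>i\<in>{..n} - {j}. A i)"
    using assms by (simp add: sum.remove)
  ultimately show ?thesis by simp
qed

lemma multi_idx_upd:
  assumes "j \<le> n" "A(j := x) \<in> multi_idx n a"
  shows "(\<forall>i>n. A i = 0) \<and> (\<Sum>i\<le>n. A i) + x = a + A j"
proof -
  have "\<forall>i>n. A i = 0"
  proof (intro allI impI)
    fix i assume "n < i"
    hence "i \<noteq> j" "(A(j := x)) i = 0" using assms by (auto simp: multi_idx_def)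
    thus "A i = 0" by simp
  qed
  moreover have "(\<Sum>i\<le>n. (A(j := x)) i) = a" using assms by (simp add: multi_idx_def)
  ultimately show ?thesis using sum_upd[OF assms(1), of A x] by simp
qed

lemma sum_nonzero_ex: "sum f S \<noteq> 0 \<Longrightarrow> \<exists>j\<in>S. f j \<noteq> 0"
  by (meson sum.neutral)

lemma E_supp:
  assumes "TS n a b c" "Eop n c (A, B) \<noteq> 0"
  shows "0 < a \<and> A \<in> multi_idx n (a - 1) \<and> B \<in> multi_idx n (Suc b)"
proof -
  obtain j where j: "j \<le> n" "0 < B j" "c (A(j := Suc (A j)), B(j := B j - 1)) \<noteq> 0"
    using sum_nonzero_ex[OF assms(2)[unfolded Eop_def prod.case]] by (auto split: if_splits)
  have "A(j := Suc (A j)) \<in> multi_idx n a" "B(j := B j - 1) \<in> multi_idx n b"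
    using assms(1) j(3) by (auto simp: TS_def)
  from multi_idx_upd[OF j(1) this(1)] multi_idx_upd[OF j(1) this(2)] j(2)
  show ?thesis by (auto simp: multi_idx_def)
qed

lemma F_supp:
  assumes "TS n a b c" "Fop n c (A, B) \<noteq> 0"
  shows "0 < b \<and> A \<in> multi_idx n (Suc a) \<and> B \<in> multi_idx n (b - 1)"
proof -
  obtain j where j: "j \<le> n" "0 < A j" "c (A(j := A j - 1), B(j := Suc (B j))) \<noteq> 0"
    using sum_nonzero_ex[OF assms(2)[unfolded Fop_def prod.case]] by (auto split: if_splits)
  have "A(j := A j - 1) \<in> multi_idx n a" "B(j := Suc (B j)) \<in> multi_idx n b"
    using assms(1) j(3) by (auto simp: TS_def)
  from multi_idx_upd[OF j(1) this(1)] multi_idx_upd[OF j(1) this(2)] j(2)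
  show ?thesis by (auto simp: multi_idx_def)
qed

lemma E_TS: "TS n a b c \<Longrightarrow> TS n (a - 1) (Suc b) (Eop n c)"
  using E_supp unfolding TS_def by blast

lemma E_TS0: "TS n 0 b c \<Longrightarrow> Eop n c = (\<lambda>p. 0)"
  using E_supp by (fastforce simp: fun_eq_iff)

lemma F_TS: "TS n a b c \<Longrightarrow> TS n (Suc a) (b - 1) (Fop n c)"
  using F_supp unfolding TS_def by blast

lemma F_TS0: "TS n a 0 c \<Longrightarrow> Fop n c = (\<lambda>p. 0)"
  using F_supp by (fastforce simp: fun_eq_iff)

lemma comm:
  assumes "TS n a b c"
  shows "Fop n (Eop n c) = (\<lambda>p. Eop n (Fop n c) p + of_int (int a - int b) * c p)"
proof (rule ext, clarify)
  fix A B
  show "Fop n (Eop n c) (A, B) = Eop n (Fop n c) (A, B) + of_int (int a - int b) * c (A, B)"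
  proof (cases "c (A, B) = 0")
    case True thus ?thesis using comm_point[of n c A B] by simp
  next
    case False
    hence "A \<in> multi_idx n a" "B \<in> multi_idx n b" using assms by (auto simp: TS_def)
    thus ?thesis using comm_point[of n c A B] by (simp add: multi_idx_def)
  qed
qed

lemma Epow_TS: "TS n a b c \<Longrightarrow> TS n (a - m) (b + m) ((Eop n ^^ m) c) \<and> (a < m \<longrightarrow> (Eop n ^^ m) c = (\<lambda>p. 0))"
proof (induction m)
  case 0 thus ?case by simp
next
  case (Suc m)
  hence IH: "TS n (a - m) (b + m) ((Eop n ^^ m) c)" "a < m \<longrightarrow> (Eop n ^^ m) c = (\<lambda>p. 0)" by auto
  have t: "TS n (a - Suc m) (b + Suc m) ((Eop n ^^ Suc m) c)"
  proof -
    have "TS n (a - m - 1) (Suc (b + m)) (Eop n ((Eop n ^^ m) c))" by (rule E_TS[OF IH(1)])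
    moreover have "a - m - 1 = a - Suc m" "Suc (b + m) = b + Suc m" by simp_all
    moreover have "Eop n ((Eop n ^^ m) c) = (Eop n ^^ Suc m) c" by simp
    ultimately show ?thesis by metis
  qed
  have "a < Suc m \<longrightarrow> (Eop n ^^ Suc m) c = (\<lambda>p. 0)"
  proof
    assume "a < Suc m"
    show "(Eop n ^^ Suc m) c = (\<lambda>p. 0)"
    proof (cases "a < m")
      case True thus ?thesis using IH(2) by (simp add: Eop_zero)
    next
      case False
      hence "a - m = 0" using \<open>a < Suc m\<close> by simp
      thus ?thesis using E_TS0[of n "b+m"] IH(1) by simp
    qed
  qed
  thus ?case using t by simp
qed

lemma comm_pow:
  assumes "TS n a b c"
  shows "Fop n ((Eop n ^^ Suc m) c) = (\<lambda>p. (Eop n ^^ Suc m) (Fop n c) p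
           + of_int ((int m + 1) * (int a - int b - int m)) * (Eop n ^^ m) c p)"
proof (induction m)
  case 0 thus ?case using comm[OF assms] by simp
next
  case (Suc m)
  have c1: "Fop n (Eop n ((Eop n ^^ Suc m) c)) = (\<lambda>p. Eop n (Fop n ((Eop n ^^ Suc m) c)) p
      + of_int (int a - int b - 2 * (int m + 1)) * (Eop n ^^ Suc m) c p)"
  proof (cases "a < Suc m")
    case True
    hence "(Eop n ^^ Suc m) c = (\<lambda>p. 0)" using Epow_TS[OF assms] by blast
    thus ?thesis by (simp add: Eop_zero Fop_zero)
  next
    case False
    have "TS n (a - Suc m) (b + Suc m) ((Eop n ^^ Suc m) c)" using Epow_TS[OF assms] by blast
    from comm[OF this] False show ?thesis by (simp add: of_nat_diff algebra_simps)
  qed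
  define s :: complex where "s = of_int ((int m + 1) * (int a - int b - int m))"
  define t :: complex where "t = of_int (int a - int b - 2 * (int m + 1))"
  have st: "s + t = of_int ((int (Suc m) + 1) * (int a - int b - int (Suc m)))"
    unfolding s_def t_def of_int_add[symmetric] by (simp add: algebra_simps)
  have "Fop n ((Eop n ^^ Suc (Suc m)) c) = Fop n (Eop n ((Eop n ^^ Suc m) c))" by simp
  also have "\<dots> = (\<lambda>p. Eop n (Fop n ((Eop n ^^ Suc m) c)) p + t * (Eop n ^^ Suc m) c p)"
    by (simp only: c1 t_def)
  also have "\<dots> = (\<lambda>p. Eop n (\<lambda>q. (Eop n ^^ Suc m) (Fop n c) q + s * (Eop n ^^ m) c q) p + t * (Eop n ^^ Suc m) c p)"
    by (simp only: Suc.IH s_def)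
  also have "\<dots> = (\<lambda>p. (Eop n (((Eop n ^^ Suc m) (Fop n c))) p + s * Eop n ((Eop n ^^ m) c) p) + t * (Eop n ^^ Suc m) c p)"
    by (simp only: Eop_lin)
  also have "\<dots> = (\<lambda>p. (Eop n ^^ Suc (Suc m)) (Fop n c) p + (s + t) * (Eop n ^^ Suc m) c p)"
    by (simp only: funpow.simps o_apply distrib_right add.assoc)
  finally show ?case by (simp only: st)
qed



definition Tset :: "nat \<Rightarrow> nat \<Rightarrow> ((nat \<Rightarrow> nat) \<times> (nat \<Rightarrow> nat)) set" where
  "Tset n D = {(A, B). (\<forall>j>n. A j = 0) \<and> (\<forall>j>n. B j = 0) \<and> (\<Sum>j\<le>n. A j) + (\<Sum>j\<le>n. B j) = D}"

definition wt :: "nat \<Rightarrow> (nat \<Rightarrow> nat) \<times> (nat \<Rightarrow> nat) \<Rightarrow> real" where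
  "wt n p = (\<Prod>j\<le>n. fact (fst p j)) * (\<Prod>j\<le>n. fact (snd p j))"

definition ip :: "nat \<Rightarrow> nat \<Rightarrow> vec \<Rightarrow> vec \<Rightarrow> complex" where
  "ip n D x y = (\<Sum>p\<in>Tset n D. of_real (wt n p) * x p * cnj (y p))"

lemma finite_Tset: "finite (Tset n D)"
proof -
  define X where "X = {f :: nat \<Rightarrow> nat. \<forall>x. (x \<in> {..n} \<longrightarrow> f x \<in> {..D}) \<and> (x \<notin> {..n} \<longrightarrow> f x = 0)}"
  have fX: "finite X" unfolding X_def by (intro finite_set_of_finite_funs) auto
  have "Tset n D \<subseteq> X \<times> X"
  proof (clarify)
    fix A B assume AB: "(A, B) \<in> Tset n D"
    have "A j \<le> D" if "j \<le> n" for j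
    proof -
      have "A j \<le> (\<Sum>j\<le>n. A j)" using that by (intro member_le_sum) auto
      thus ?thesis using AB by (auto simp: Tset_def)
    qed
    moreover have "B j \<le> D" if "j \<le> n" for j
    proof -
      have "B j \<le> (\<Sum>j\<le>n. B j)" using that by (intro member_le_sum) auto
      thus ?thesis using AB by (auto simp: Tset_def)
    qed
    ultimately show "A \<in> X \<and> B \<in> X" using AB by (auto simp: X_def Tset_def)
  qed
  moreover have "finite (X \<times> X)" using fX by simp
  ultimately show ?thesis by (rule finite_subset)
qed

lemma wt_pos: "wt n p > 0"
  by (simp add: wt_def prod_pos)

lemma prod_upd:
  fixes A :: "nat \<Rightarrow> nat"
  assumes "j \<le> n"
  shows "(\<Prod>i\<le>n. (fact ((A(j := x)) i) :: real)) * fact (A j) = (\<Prod>i\<le>n. fact (A i)) * fact x"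
proof -
  have "(\<Prod>i\<le>n. (fact ((A(j := x)) i) :: real)) = fact x * (\<Prod>i\<in>{..n} - {j}. fact (A i))"
    using assms by (simp add: prod.remove)
  moreover have "(\<Prod>i\<le>n. (fact (A i) :: real)) = fact (A j) * (\<Prod>i\<in>{..n} - {j}. fact (A i))"
    using assms by (simp add: prod.remove)
  ultimately show ?thesis by simp
qed

lemma wt_shift:
  assumes "k \<le> n" "0 < B k"
  shows "wt n (A(k := Suc (A k)), B(k := B k - 1)) * of_nat (B k) = wt n (A, B) * of_nat (Suc (A k))"
proof -
  define PA where "PA = (\<Prod>i\<le>n. (fact (A i) :: real))"
  define PB where "PB = (\<Prod>i\<le>n. (fact (B i) :: real))"
  define PA' where "PA' = (\<Prod>i\<le>n. (fact ((A(k := Suc (A k))) i) :: real))"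
  define PB' where "PB' = (\<Prod>i\<le>n. (fact ((B(k := B k - 1)) i) :: real))"
  have a: "PA' * fact (A k) = PA * fact (Suc (A k))" unfolding PA'_def PA_def by (rule prod_upd[OF assms(1)])
  have b: "PB' * fact (B k) = PB * fact (B k - 1)" unfolding PB'_def PB_def by (rule prod_upd[OF assms(1)])
  have fA: "(fact (Suc (A k)) :: real) = of_nat (Suc (A k)) * fact (A k)" by simp
  have fB: "(fact (B k) :: real) = of_nat (B k) * fact (B k - 1)"
    using assms(2) by (cases "B k") simp_all
  have "PA' * fact (A k) = (PA * of_nat (Suc (A k))) * fact (A k)"
    using a unfolding fA by (simp only: mult.assoc)
  hence a': "PA' = PA * of_nat (Suc (A k))" by (simp only: mult_cancel_right fact_nonzero simp_thms)
  have "(PB' * of_nat (B k)) * fact (B k - 1) = PB * fact (B k - 1)"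
    using b unfolding fB by (simp only: mult.assoc)
  hence b': "PB' * of_nat (B k) = PB" by simp
  show ?thesis unfolding wt_def fst_conv snd_conv PA_def[symmetric] PB_def[symmetric]
    PA'_def[symmetric] PB'_def[symmetric] using a' b' by (simp add: algebra_simps)
qed



lemma adjoint: "ip n D (Eop n x) y = ip n D x (Fop n y)"
proof -
  define L where "L q = (case q of ((A, B), k) \<Rightarrow>
      of_real (wt n (A, B)) * (of_nat (Suc (A k)) * x (A(k := Suc (A k)), B(k := B k - 1))) * cnj (y (A, B)))" for q
  define R where "R q = (case q of ((A, B), k) \<Rightarrow>
      of_real (wt n (A, B)) * x (A, B) * cnj (of_nat (Suc (B k)) * y (A(k := A k - 1), B(k := Suc (B k)))))" for q
  define SL where "SL = {q \<in> Tset n D \<times> {..n}. 0 < snd (fst q) (snd q)}"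
  define SR where "SR = {q \<in> Tset n D \<times> {..n}. 0 < fst (fst q) (snd q)}"
  have fin: "finite (Tset n D \<times> {..n})" using finite_Tset by auto
  have "ip n D (Eop n x) y = (\<Sum>p\<in>Tset n D. \<Sum>k\<le>n. (case (p, k) of ((A, B), k) \<Rightarrow> if 0 < B k then L ((A, B), k) else 0))"
    unfolding ip_def Eop_def L_def
    by (intro sum.cong refl) (auto simp: sum_distrib_left sum_distrib_right intro!: sum.cong)
  also have "\<dots> = (\<Sum>q\<in>Tset n D \<times> {..n}. if 0 < snd (fst q) (snd q) then L q else 0)"
    by (subst sum.cartesian_product) (auto intro!: sum.cong)
  also have "\<dots> = sum L SL" unfolding SL_def by (rule sum.inter_filter[OF fin, symmetric])
  finally have lhs: "ip n D (Eop n x) y = sum L SL" .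
  have "ip n D x (Fop n y) = (\<Sum>p\<in>Tset n D. \<Sum>k\<le>n. (case (p, k) of ((A, B), k) \<Rightarrow> if 0 < A k then R ((A, B), k) else 0))"
    unfolding ip_def Fop_def R_def
    by (intro sum.cong refl) (auto simp: sum_distrib_left sum_distrib_right intro!: sum.cong)
  also have "\<dots> = (\<Sum>q\<in>Tset n D \<times> {..n}. if 0 < fst (fst q) (snd q) then R q else 0)"
    by (subst sum.cartesian_product) (auto intro!: sum.cong)
  also have "\<dots> = sum R SR" unfolding SR_def by (rule sum.inter_filter[OF fin, symmetric])
  finally have rhs: "ip n D x (Fop n y) = sum R SR" .
  have "sum L SL = sum R SR"
  proof (rule sum.reindex_bij_witness[where j = "\<lambda>((A, B), k). ((A(k := Suc (A k)), B(k := B k - 1)), k)"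
        and i = "\<lambda>((A, B), k). ((A(k := A k - 1), B(k := Suc (B k))), k)"])
    fix q assume q: "q \<in> SL"
    then obtain A B k where qe: "q = ((A, B), k)" and AB: "(A, B) \<in> Tset n D" and k: "k \<le> n" "0 < B k"
      by (auto simp: SL_def)
    show "(\<lambda>((A, B), k). ((A(k := A k - 1), B(k := Suc (B k))), k))
          ((\<lambda>((A, B), k). ((A(k := Suc (A k)), B(k := B k - 1)), k)) q) = q"
      using k by (auto simp: qe fun_eq_iff)
    have s1: "(\<Sum>i\<le>n. (A(k := Suc (A k))) i) + A k = (\<Sum>i\<le>n. A i) + Suc (A k)" by (rule sum_upd[OF k(1)])
    have s2: "(\<Sum>i\<le>n. (B(k := B k - 1)) i) + B k = (\<Sum>i\<le>n. B i) + (B k - 1)" by (rule sum_upd[OF k(1)])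
    show "(\<lambda>((A, B), k). ((A(k := Suc (A k)), B(k := B k - 1)), k)) q \<in> SR"
      using AB k s1 s2 by (auto simp: qe SR_def Tset_def)
    show "R ((\<lambda>((A, B), k). ((A(k := Suc (A k)), B(k := B k - 1)), k)) q) = L q"
    proof -
      have bb: "(B(k := B k - 1))(k := Suc (B k - 1)) = B" using k by (auto simp: fun_eq_iff)
      have "R ((A(k := Suc (A k)), B(k := B k - 1)), k) =
         of_real (wt n (A(k := Suc (A k)), B(k := B k - 1)) * of_nat (B k)) * x (A(k := Suc (A k)), B(k := B k - 1)) * cnj (y (A, B))"
        using k by (simp add: R_def bb)
      also have "\<dots> = L q" unfolding wt_shift[of k n B A, OF k] by (simp add: L_def qe)
      finally show ?thesis by (simp add: qe)
    qed
  next
    fix q assume q: "q \<in> SR"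
    then obtain A B k where qe: "q = ((A, B), k)" and AB: "(A, B) \<in> Tset n D" and k: "k \<le> n" "0 < A k"
      by (auto simp: SR_def)
    show "(\<lambda>((A, B), k). ((A(k := Suc (A k)), B(k := B k - 1)), k))
          ((\<lambda>((A, B), k). ((A(k := A k - 1), B(k := Suc (B k))), k)) q) = q"
      using k by (auto simp: qe fun_eq_iff)
    have s1: "(\<Sum>i\<le>n. (A(k := A k - 1)) i) + A k = (\<Sum>i\<le>n. A i) + (A k - 1)" by (rule sum_upd[OF k(1)])
    have s2: "(\<Sum>i\<le>n. (B(k := Suc (B k))) i) + B k = (\<Sum>i\<le>n. B i) + Suc (B k)" by (rule sum_upd[OF k(1)])
    show "(\<lambda>((A, B), k). ((A(k := A k - 1), B(k := Suc (B k))), k)) q \<in> SL"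
      using AB k s1 s2 by (auto simp: qe SL_def Tset_def)
  qed
  thus ?thesis using lhs rhs by simp
qed



definition Nrm :: "nat \<Rightarrow> nat \<Rightarrow> vec \<Rightarrow> real" where
  "Nrm n D c = (\<Sum>p\<in>Tset n D. wt n p * (cmod (c p))\<^sup>2)"

lemma ip_self: "ip n D c c = of_real (Nrm n D c)"
  unfolding ip_def Nrm_def of_real_sum
  by (rule sum.cong) (simp_all add: mult.assoc flip: complex_norm_square)

lemma Nrm_nonneg: "Nrm n D c \<ge> 0"
  unfolding Nrm_def by (intro sum_nonneg mult_nonneg_nonneg) (simp_all add: less_imp_le[OF wt_pos])

lemma Nrm_zero: "Nrm n D c = 0 \<Longrightarrow> p \<in> Tset n D \<Longrightarrow> c p = 0"
proof -
  assume N: "Nrm n D c = 0" and p: "p \<in> Tset n D"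
  have "\<forall>q\<in>Tset n D. wt n q * (cmod (c q))\<^sup>2 = 0"
    using N unfolding Nrm_def
    by (subst sum_nonneg_eq_0_iff[symmetric]) (auto simp: finite_Tset less_imp_le[OF wt_pos])
  hence "wt n p * (cmod (c p))\<^sup>2 = 0" using p by blast
  thus "c p = 0" using wt_pos[of n p] by simp
qed

lemma TS_supp: "TS n a b c \<Longrightarrow> c p \<noteq> 0 \<Longrightarrow> p \<in> Tset n (a + b)"
  by (cases p) (auto simp: TS_def Tset_def multi_idx_def)

lemma TS_lin: "TS n a b x \<Longrightarrow> TS n a b y \<Longrightarrow> TS n a b (\<lambda>p. x p + s * y p)"
  unfolding TS_def by (metis add.right_neutral mult_zero_right)

lemma TS_zero: "TS n a b (\<lambda>p. 0)"
  unfolding TS_def by simp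

lemma TS_EF: "TS n a b c \<Longrightarrow> TS n a b (Eop n (Fop n c))"
proof (cases "b = 0")
  case True
  assume "TS n a b c"
  hence "Fop n c = (\<lambda>p. 0)" using F_TS0 True by blast
  thus ?thesis by (simp add: Eop_zero TS_zero)
next
  case False
  assume "TS n a b c"
  hence "TS n (Suc a - 1) (Suc (b - 1)) (Eop n (Fop n c))" by (intro E_TS F_TS)
  thus ?thesis using False by simp
qed

lemma main_inj:
  "TS n a b c \<Longrightarrow> int m \<le> int a - int b \<Longrightarrow> (Eop n ^^ m) c = (\<lambda>p. 0) \<Longrightarrow> c = (\<lambda>p. 0)"
proof (induction m arbitrary: c)
  case 0 thus ?case by simp
next
  case (Suc m)
  note TSc = Suc.prems(1)
  define sv :: int where "sv = (int m + 1) * (int a - int b - int m)"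
  have svpos: "sv > 0" using Suc.prems(2) unfolding sv_def by simp
  define s :: complex where "s = of_int sv"
  have "Fop n ((Eop n ^^ Suc m) c) = (\<lambda>p. (Eop n ^^ Suc m) (Fop n c) p + s * (Eop n ^^ m) c p)"
    unfolding s_def sv_def by (rule comm_pow[OF TSc])
  hence "(\<lambda>p. 0) = (\<lambda>p. (Eop n ^^ m) (Eop n (Fop n c)) p + s * (Eop n ^^ m) c p)"
    using Suc.prems(3) by (simp add: Fop_zero funpow_Suc_right del: funpow.simps)
  hence "(Eop n ^^ m) (\<lambda>p. Eop n (Fop n c) p + s * c p) = (\<lambda>p. 0)"
    by (simp add: Epow_lin)
  moreover have "TS n a b (\<lambda>p. Eop n (Fop n c) p + s * c p)"
    by (intro TS_lin TS_EF TSc)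
  ultimately have u: "(\<lambda>p. Eop n (Fop n c) p + s * c p) = (\<lambda>p. 0)"
    using Suc.IH Suc.prems(2) by simp
  hence EF: "Eop n (Fop n c) = (\<lambda>p. - s * c p)"
    by (auto simp: fun_eq_iff eq_neg_iff_add_eq_0 dest: fun_cong)
  define D where "D = a + b"
  have "ip n D (Eop n (Fop n c)) c = ip n D (Fop n c) (Fop n c)" by (rule adjoint)
  moreover have "ip n D (Eop n (Fop n c)) c = - s * ip n D c c"
    unfolding EF ip_def by (simp add: sum_distrib_left algebra_simps)
  ultimately have h: "of_real (Nrm n D (Fop n c)) = - s * of_real (Nrm n D c)"
    by (simp add: ip_self)
  have "Nrm n D (Fop n c) = - of_int sv * Nrm n D c"
  proof -
    have "- s * of_real (Nrm n D c) = of_real (- of_int sv * Nrm n D c)" unfolding s_def by simp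
    with h show ?thesis by (simp only: of_real_eq_iff)
  qed
  moreover have "Nrm n D (Fop n c) \<ge> 0" "Nrm n D c \<ge> 0" by (rule Nrm_nonneg)+
  ultimately have "of_int sv * Nrm n D c \<le> 0" by linarith
  moreover have "of_int sv > (0::real)" using svpos by simp
  ultimately have "Nrm n D c \<le> 0" by (simp add: mult_le_0_iff)
  hence "Nrm n D c = 0" using Nrm_nonneg[of n D c] by linarith
  show ?case
  proof (rule ext)
    fix p show "c p = 0"
    proof (rule ccontr)
      assume "c p \<noteq> 0"
      hence "p \<in> Tset n D" using TS_supp[OF TSc] by (simp add: D_def)
      thus False using Nrm_zero[OF \<open>Nrm n D c = 0\<close>] \<open>c p \<noteq> 0\<close> by blast
    qed
  qed
qed



lemma prod_upd':
  fixes A :: "nat \<Rightarrow> nat" and f :: "nat \<Rightarrow> 'a::comm_monoid_mult"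
  assumes "j \<le> n"
  shows "(\<Prod>i\<le>n. f ((A(j := x)) i)) * f (A j) = (\<Prod>i\<le>n. f (A i)) * f x"
proof -
  have "(\<Prod>i\<le>n. f ((A(j := x)) i)) = f x * (\<Prod>i\<in>{..n} - {j}. f (A i))"
    using assms by (simp add: prod.remove)
  moreover have "(\<Prod>i\<le>n. f (A i)) = f (A j) * (\<Prod>i\<in>{..n} - {j}. f (A i))"
    using assms by (simp add: prod.remove)
  ultimately show ?thesis by (simp add: ac_simps)
qed

definition Pf :: "nat \<Rightarrow> (nat \<Rightarrow> nat) \<Rightarrow> (nat \<Rightarrow> nat) \<Rightarrow> complex" where
  "Pf n A I = (\<Prod>j\<le>n. of_nat (fact (A j + I j)) / of_nat (fact (A j)))"

lemma eta_alt: "eta n m c (A, B) = (\<Sum>I\<in>multi_idx n m. if (\<forall>j. I j \<le> B j)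
   then multinom n m I * Pf n A I * c (\<lambda>j. A j + I j, \<lambda>j. B j - I j) else 0)"
  unfolding eta_def Pf_def by simp

lemma multi_idx_0: "multi_idx n 0 = {\<lambda>_. 0}"
  by (auto simp: multi_idx_def fun_eq_iff) (metis atMost_iff not_le)

lemma eta_0: "eta n 0 c = c"
proof (rule ext, clarify)
  fix A B
  have "multinom n 0 (\<lambda>_. 0) = 1" by (simp add: multinom_def)
  moreover have "Pf n A (\<lambda>_. 0) = 1" by (simp add: Pf_def)
  ultimately show "eta n 0 c (A, B) = c (A, B)"
    unfolding eta_alt multi_idx_0 by simp
qed

lemma pascal:
  assumes J: "J \<in> multi_idx n (Suc m)"
  shows "multinom n (Suc m) J = (\<Sum>k\<le>n. if 0 < J k then multinom n m (J(k := J k - 1)) else 0)"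
proof -
  define Q where "Q = (\<Prod>i\<le>n. (of_nat (fact (J i)) :: complex))"
  have Qnz: "Q \<noteq> 0" unfolding Q_def by simp
  have trm: "(if 0 < J k then multinom n m (J(k := J k - 1)) else 0) = of_nat (fact m) * of_nat (J k) / Q"
    if k: "k \<le> n" for k
  proof (cases "J k = 0")
    case True thus ?thesis by simp
  next
    case False
    have a: "(\<Prod>i\<le>n. (of_nat (fact ((J(k := J k - 1)) i)) :: complex)) * of_nat (fact (J k)) = Q * of_nat (fact (J k - 1))"
      unfolding Q_def by (rule prod_upd'[OF k])
    have fJ: "(of_nat (fact (J k)) :: complex) = of_nat (J k) * of_nat (fact (J k - 1))"
      using False by (cases "J k") (simp_all add: algebra_simps)
    have "(\<Prod>i\<le>n. (of_nat (fact ((J(k := J k - 1)) i)) :: complex)) * of_nat (J k) = Q"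
    proof -
      have "((\<Prod>i\<le>n. (of_nat (fact ((J(k := J k - 1)) i)) :: complex)) * of_nat (J k)) * of_nat (fact (J k - 1)) = Q * of_nat (fact (J k - 1))"
        using a unfolding fJ by (simp only: mult.assoc)
      thus ?thesis by simp
    qed
    moreover have "(\<Prod>i\<le>n. (of_nat (fact ((J(k := J k - 1)) i)) :: complex)) \<noteq> 0" by simp
    ultimately show ?thesis using False Qnz
      by (auto simp: multinom_def field_simps)
  qed
  have "(\<Sum>k\<le>n. if 0 < J k then multinom n m (J(k := J k - 1)) else 0)
      = (\<Sum>k\<le>n. of_nat (fact m) * of_nat (J k) / Q)" by (rule sum.cong) (simp_all add: trm)
  also have "\<dots> = of_nat (fact m) * of_nat (\<Sum>k\<le>n. J k) / Q"
    by (simp add: sum_divide_distrib sum_distrib_left)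
  also have "\<dots> = of_nat (fact m) * of_nat (Suc m) / Q" using J by (simp add: multi_idx_def)
  also have "\<dots> = multinom n (Suc m) J" by (simp add: multinom_def Q_def algebra_simps)
  finally show ?thesis by simp
qed



lemma Pf_shift:
  assumes k: "k \<le> n"
  shows "of_nat (Suc (A k)) * Pf n (A(k := Suc (A k))) I = Pf n A (I(k := Suc (I k)))"
proof -
  define X where "X = (\<Prod>i\<le>n. (of_nat (fact (A i + (I(k := Suc (I k))) i)) :: complex))"
  have X': "(\<Prod>i\<le>n. (of_nat (fact ((A(k := Suc (A k))) i + I i)) :: complex)) = X"
    unfolding X_def by (rule prod.cong) auto
  define QA where "QA = (\<Prod>i\<le>n. (of_nat (fact (A i)) :: complex))"
  have "(\<Prod>i\<le>n. (of_nat (fact ((A(k := Suc (A k))) i)) :: complex)) * of_nat (fact (A k)) = QA * of_nat (fact (Suc (A k)))"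
    unfolding QA_def by (rule prod_upd'[OF k])
  hence "((\<Prod>i\<le>n. (of_nat (fact ((A(k := Suc (A k))) i)) :: complex))) * of_nat (fact (A k)) = (QA * of_nat (Suc (A k))) * of_nat (fact (A k))"
    by (simp add: algebra_simps)
  hence QA': "(\<Prod>i\<le>n. (of_nat (fact ((A(k := Suc (A k))) i)) :: complex)) = QA * of_nat (Suc (A k))"
    by simp
  have e1: "Pf n (A(k := Suc (A k))) I = X / (QA * of_nat (Suc (A k)))"
    unfolding Pf_def prod_dividef X' QA' ..
  have e2: "Pf n A (I(k := Suc (I k))) = X / QA"
    unfolding Pf_def prod_dividef X_def QA_def ..
  have nz: "QA \<noteq> 0" unfolding QA_def by simp
  have "of_nat (Suc (A k)) * (X / (QA * of_nat (Suc (A k)))) = X / QA"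
    using nz by (simp add: field_simps del: of_nat_Suc)
  thus ?thesis unfolding e1 e2 .
qed



lemma eta_Suc: "eta n (Suc m) c = Eop n (eta n m c)"
proof (rule ext, clarify)
  fix A B :: "nat \<Rightarrow> nat"
  define A' where "A' k = A(k := Suc (A k))" for k :: nat
  define B' where "B' k = B(k := B k - 1)" for k :: nat
  define g where "g q = (case q of (k, I) \<Rightarrow> of_nat (Suc (A k)) * (multinom n m I * Pf n (A' k) I * c (\<lambda>j. A' k j + I j, \<lambda>j. B' k j - I j)))" for q
  define h where "h q = (case q of (J, k) \<Rightarrow> multinom n m (J(k := J k - 1)) * Pf n A J * c (\<lambda>j. A j + J j, \<lambda>j. B j - J j))" for q
  define Sg where "Sg = {q \<in> {..n} \<times> multi_idx n m. 0 < B (fst q) \<and> (\<forall>j. snd q j \<le> B' (fst q) j)}"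
  define Sh where "Sh = {q \<in> multi_idx n (Suc m) \<times> {..n}. (\<forall>j. fst q j \<le> B j) \<and> 0 < fst q (snd q)}"
  have fin1: "finite ({..n} \<times> multi_idx n m)" by (simp add: finite_multi_idx)
  have fin2: "finite (multi_idx n (Suc m) \<times> {..n})" by (simp add: finite_multi_idx)
  have "Eop n (eta n m c) (A, B) = (\<Sum>k\<le>n. \<Sum>I\<in>multi_idx n m. if 0 < B k \<and> (\<forall>j. I j \<le> B' k j) then g (k, I) else 0)"
    unfolding Eop_def prod.case eta_alt
    by (rule sum.cong[OF refl]) (auto simp: sum_distrib_left g_def A'_def B'_def intro!: sum.cong)
  also have "\<dots> = (\<Sum>q\<in>{..n} \<times> multi_idx n m. if 0 < B (fst q) \<and> (\<forall>j. snd q j \<le> B' (fst q) j) then g q else 0)"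
    by (subst sum.cartesian_product) (auto intro!: sum.cong)
  also have "\<dots> = sum g Sg" unfolding Sg_def by (rule sum.inter_filter[OF fin1, symmetric])
  finally have rhs: "Eop n (eta n m c) (A, B) = sum g Sg" .
  have "eta n (Suc m) c (A, B) = (\<Sum>J\<in>multi_idx n (Suc m). \<Sum>k\<le>n. if (\<forall>j. J j \<le> B j) \<and> 0 < J k then h (J, k) else 0)"
    unfolding eta_alt
  proof (rule sum.cong[OF refl])
    fix J assume J: "J \<in> multi_idx n (Suc m)"
    show "(if \<forall>j. J j \<le> B j then multinom n (Suc m) J * Pf n A J * c (\<lambda>j. A j + J j, \<lambda>j. B j - J j) else 0) =
         (\<Sum>k\<le>n. if (\<forall>j. J j \<le> B j) \<and> 0 < J k then h (J, k) else 0)"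
    proof (cases "\<forall>j. J j \<le> B j")
      case True thus ?thesis unfolding pascal[OF J] h_def by (auto simp: sum_distrib_right intro!: sum.cong)
    next
      case False
      hence "\<not> (\<forall>j. J j \<le> B j)" by blast
      thus ?thesis by (simp only: if_False simp_thms sum.neutral_const)
    qed
  qed
  also have "\<dots> = (\<Sum>q\<in>multi_idx n (Suc m) \<times> {..n}. if (\<forall>j. fst q j \<le> B j) \<and> 0 < fst q (snd q) then h q else 0)"
    by (subst sum.cartesian_product) (auto intro!: sum.cong)
  also have "\<dots> = sum h Sh" unfolding Sh_def by (rule sum.inter_filter[OF fin2, symmetric])
  finally have lhs: "eta n (Suc m) c (A, B) = sum h Sh" .
  have "sum g Sg = sum h Sh"
  proof (rule sum.reindex_bij_witness[where j = "\<lambda>(k, I). (I(k := Suc (I k)), k)"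
        and i = "\<lambda>(J, k). (k, J(k := J k - 1))"])
    fix q assume q: "q \<in> Sg"
    then obtain k I where qe: "q = (k, I)" and k: "k \<le> n" "0 < B k" and I: "I \<in> multi_idx n m"
      and IB: "\<forall>j. I j \<le> B' k j"
      by (auto simp: Sg_def)
    show "(\<lambda>(J, k). (k, J(k := J k - 1))) ((\<lambda>(k, I). (I(k := Suc (I k)), k)) q) = q"
      by (auto simp: qe fun_eq_iff)
    have s1: "(\<Sum>i\<le>n. (I(k := Suc (I k))) i) + I k = (\<Sum>i\<le>n. I i) + Suc (I k)" by (rule sum_upd[OF k(1)])
    have JB: "\<forall>j. (I(k := Suc (I k))) j \<le> B j"
      using IB k(2) unfolding B'_def by (auto simp: le_diff_conv2 split: if_splits)
    show "(\<lambda>(k, I). (I(k := Suc (I k)), k)) q \<in> Sh"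
      using I k s1 JB by (auto simp: qe Sh_def multi_idx_def)
    show "h ((\<lambda>(k, I). (I(k := Suc (I k)), k)) q) = g q"
    proof -
      have e1: "(I(k := Suc (I k)))(k := (I(k := Suc (I k))) k - 1) = I" by (auto simp: fun_eq_iff)
      have e2: "(\<lambda>j. A j + (I(k := Suc (I k))) j) = (\<lambda>j. A' k j + I j)"
        by (auto simp: fun_eq_iff A'_def)
      have e3: "(\<lambda>j. B j - (I(k := Suc (I k))) j) = (\<lambda>j. B' k j - I j)"
        by (auto simp: fun_eq_iff B'_def)
      have e4: "Pf n A (I(k := Suc (I k))) = of_nat (Suc (A k)) * Pf n (A' k) I"
        unfolding A'_def by (rule Pf_shift[OF k(1), symmetric])
      show ?thesis unfolding qe h_def g_def prod.case e1 e2 e3 e4 by (simp add: ac_simps)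
    qed
  next
    fix q assume q: "q \<in> Sh"
    then obtain J k where qe: "q = (J, k)" and k: "k \<le> n" "0 < J k" and J: "J \<in> multi_idx n (Suc m)"
      and JB: "\<forall>j. J j \<le> B j"
      by (auto simp: Sh_def)
    show "(\<lambda>(k, I). (I(k := Suc (I k)), k)) ((\<lambda>(J, k). (k, J(k := J k - 1))) q) = q"
      using k by (auto simp: qe fun_eq_iff)
    have s1: "(\<Sum>i\<le>n. (J(k := J k - 1)) i) + J k = (\<Sum>i\<le>n. J i) + (J k - 1)" by (rule sum_upd[OF k(1)])
    have Bk: "0 < B k" using JB k(2) by (metis less_le_trans)
    have IB: "\<forall>j. (J(k := J k - 1)) j \<le> B' k j"
      using JB unfolding B'_def by (auto simp: diff_le_mono)
    show "(\<lambda>(J, k). (k, J(k := J k - 1))) q \<in> Sg"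
      using J k s1 IB Bk by (auto simp: qe Sg_def multi_idx_def)
  qed
  thus "eta n (Suc m) c (A, B) = Eop n (eta n m c) (A, B)" using lhs rhs by simp
qed

lemma eta_pow: "eta n m = Eop n ^^ m"
proof (rule ext)
  fix c show "eta n m c = (Eop n ^^ m) c"
    by (induction m) (simp_all add: eta_0 eta_Suc)
qed



lemma n0_step:
  assumes "TS 0 a b c" "0 < a" "Eop 0 c = (\<lambda>p. 0)"
  shows "c = (\<lambda>p. 0)"
proof (rule ext, clarify)
  fix A B :: "nat \<Rightarrow> nat"
  show "c (A, B) = 0"
  proof (rule ccontr)
    assume nz: "c (A, B) \<noteq> 0"
    hence "A \<in> multi_idx 0 a" using assms(1) by (auto simp: TS_def)
    hence A0: "A 0 = a" by (simp add: multi_idx_def)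
    have eA: "(A(0 := A 0 - 1))(0 := Suc ((A(0 := A 0 - 1)) 0)) = A"
      using A0 assms(2) by (auto simp: fun_eq_iff)
    have eB: "(B(0 := Suc (B 0)))(0 := (B(0 := Suc (B 0))) 0 - 1) = B"
      by (auto simp: fun_eq_iff)
    have "Eop 0 c (A(0 := A 0 - 1), B(0 := Suc (B 0))) = of_nat (Suc (A 0 - 1)) * c (A, B)"
    proof -
      have eA': "A(0 := Suc (A 0 - Suc 0)) = A" using A0 assms(2) by (auto simp: fun_eq_iff)
      show ?thesis unfolding Eop_def prod.case by (simp add: eA eB eA')
    qed
    moreover have "of_nat (Suc (A 0 - 1)) * c (A, B) \<noteq> 0" using nz by (simp del: of_nat_Suc)
    ultimately show False using assms(3) by (metis)
  qed
qed

lemma n0_inj: "TS 0 a b c \<Longrightarrow> m \<le> a \<Longrightarrow> (Eop 0 ^^ m) c = (\<lambda>p. 0) \<Longrightarrow> c = (\<lambda>p. 0)"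
proof (induction m arbitrary: a b c)
  case 0 thus ?case by simp
next
  case (Suc m)
  have "(Eop 0 ^^ m) (Eop 0 c) = (\<lambda>p. 0)" using Suc.prems(3) by (simp add: funpow_Suc_right del: funpow.simps)
  moreover have "TS 0 (a - 1) (Suc b) (Eop 0 c)" by (rule E_TS[OF Suc.prems(1)])
  moreover have "m \<le> a - 1" using Suc.prems(2) by simp
  ultimately have "Eop 0 c = (\<lambda>p. 0)" using Suc.IH by blast
  thus ?case using n0_step[OF Suc.prems(1)] Suc.prems(2) by simp
qed

theorem proposition5p1:
  fixes n h k d :: nat
  assumes "h < k" and "k \<le> d"
    and "dimS n k * dimS n (d - k) \<le> dimS n h * dimS n (d - h)"
  shows "inj_on (eta n (k - h)) (tensor_space n k d)"
proof (rule inj_onI)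
  fix c1 c2 assume c1: "c1 \<in> tensor_space n k d" and c2: "c2 \<in> tensor_space n k d"
    and eq: "eta n (k - h) c1 = eta n (k - h) c2"
  define c where "c = (\<lambda>p. c1 p + (-1) * c2 p)"
  have TSc: "TS n k (d - k) c" unfolding c_def
    by (rule TS_lin) (use c1 c2 in \<open>simp_all add: TS_def tensor_space_def\<close>)
  have "(Eop n ^^ (k - h)) c = (\<lambda>p. (Eop n ^^ (k - h)) c1 p + (-1) * (Eop n ^^ (k - h)) c2 p)"
    unfolding c_def by (rule Epow_lin)
  also have "\<dots> = (\<lambda>p. 0)" using eq unfolding eta_pow by simp
  finally have z: "(Eop n ^^ (k - h)) c = (\<lambda>p. 0)" .
  have "c = (\<lambda>p. 0)"
  proof (cases "n = 0")
    case True
    thus ?thesis using n0_inj[of k "d - k" c "k - h"] TSc z by simp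
  next
    case False
    have card: "\<And>j. dimS n j = (n + j) choose j" by (simp add: dimS_def card_multi_idx)
    have "d \<le> k + h" using dim_cond[of n h k d] False assms card by simp
    hence "int (k - h) \<le> int k - int (d - k)" using assms by simp
    thus ?thesis using main_inj[OF TSc _ z] by simp
  qed
  thus "c1 = c2" unfolding c_def by (auto simp: fun_eq_iff dest: fun_cong)
qed


end
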